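(* Let $\Gamma$ be a group having a normal abelian subgroup $T$ with the following properties: (i) there is an integer $d \ge 1$ such that $T$ is isomorphic to $\mathbf{Z}^d$; (ii) the action of $\Gamma/T$ on $T$ induced by conjugation is faithful; (iii) the associated representation of $\Gamma/T$ on $T \otimes_{\mathbf Z} \mathbf Q \cong \mathbf Q^d$ is irreducible. Then $\Gamma$ is indecomposable.
   Context: A group $\Gamma$ is called indecomposable if $\Gamma \neq \{1\}$ and, for every isomorphism of $\Gamma$ with a direct product $\Gamma_1 \times \Gamma_2$, one of the groups $\Gamma_1, \Gamma_2$ is trivial. *)

theory Defs
  imports "HOL-Algebra.Algebra"
begin

definition zd_group :: "nat \<Rightarrow> (nat \<Rightarrow> int) monoid" where
  "zd_group d = product_group {..<d} (\<lambda>_. integer_group)"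

definition zd_basis :: "nat \<Rightarrow> nat \<Rightarrow> (nat \<Rightarrow> int)" where
  "zd_basis d j = (\<lambda>i\<in>{..<d}. if i = j then 1 else 0)"

text \<open>The action of Gamma/T on T induced by conjugation is faithful: a coset gT acting
  trivially on T by conjugation is the identity coset T.\<close>
definition conj_action_faithful :: "('g, 'm) monoid_scheme \<Rightarrow> 'g set \<Rightarrow> bool" where
  "conj_action_faithful G T \<longleftrightarrow>
     (\<forall>g \<in> carrier G. (\<forall>t \<in> T. g \<otimes>\<^bsub>G\<^esub> t \<otimes>\<^bsub>G\<^esub> inv\<^bsub>G\<^esub> g = t) \<longrightarrow> T #>\<^bsub>G\<^esub> g = T)"

text \<open>Integer matrix of conjugation by g on T, in the coordinates given by an
  isomorphism phi : T -> Z^d (entry (i,j) = i-th coordinate of the image of e_j).\<close>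
definition conj_matrix ::
  "('g, 'm) monoid_scheme \<Rightarrow> 'g set \<Rightarrow> ('g \<Rightarrow> nat \<Rightarrow> int) \<Rightarrow> nat \<Rightarrow> 'g \<Rightarrow> nat \<Rightarrow> nat \<Rightarrow> int" where
  "conj_matrix G T \<phi> d g i j =
     \<phi> (g \<otimes>\<^bsub>G\<^esub> the_inv_into T \<phi> (zd_basis d j) \<otimes>\<^bsub>G\<^esub> inv\<^bsub>G\<^esub> g) i"

text \<open>Q^d = T \<otimes>_Z Q, as rational vectors indexed by {..<d} (zero outside).\<close>
definition ratvecs :: "nat \<Rightarrow> (nat \<Rightarrow> rat) set" where
  "ratvecs d = {v. \<forall>i\<ge>d. v i = 0}"

definition rat_rep ::
  "('g, 'm) monoid_scheme \<Rightarrow> 'g set \<Rightarrow> ('g \<Rightarrow> nat \<Rightarrow> int) \<Rightarrow> nat \<Rightarrow> 'g \<Rightarrow> (nat \<Rightarrow> rat) \<Rightarrow> (nat \<Rightarrow> rat)" where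
  "rat_rep G T \<phi> d g v =
     (\<lambda>i. if i < d then (\<Sum>j<d. of_int (conj_matrix G T \<phi> d g i j) * v j) else 0)"

definition rat_subspace :: "nat \<Rightarrow> (nat \<Rightarrow> rat) set \<Rightarrow> bool" where
  "rat_subspace d W \<longleftrightarrow> W \<subseteq> ratvecs d \<and> (\<lambda>_. 0) \<in> W \<and>
     (\<forall>v\<in>W. \<forall>w\<in>W. (\<lambda>i. v i + w i) \<in> W) \<and>
     (\<forall>c::rat. \<forall>v\<in>W. (\<lambda>i. c * v i) \<in> W)"

definition rat_rep_irreducible ::
  "('g, 'm) monoid_scheme \<Rightarrow> 'g set \<Rightarrow> ('g \<Rightarrow> nat \<Rightarrow> int) \<Rightarrow> nat \<Rightarrow> bool" where
  "rat_rep_irreducible G T \<phi> d \<longleftrightarrow> ratvecs d \<noteq> {\<lambda>_. 0} \<and>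
     (\<forall>W. rat_subspace d W \<and> (\<forall>g \<in> carrier G. rat_rep G T \<phi> d g ` W \<subseteq> W)
          \<longrightarrow> W = {\<lambda>_. 0} \<or> W = ratvecs d)"

end

theory Submission
  imports Defs
begin


lemma zd_group_group: "group (zd_group d)"
  unfolding zd_group_def by (simp)

lemma zd_carrier: "carrier (zd_group d) = ({..<d} \<rightarrow>\<^sub>E (UNIV::int set))"
  unfolding zd_group_def by simp

lemma zd_mult: "x \<otimes>\<^bsub>zd_group d\<^esub> y = (\<lambda>i\<in>{..<d}. x i + y i)"
  unfolding zd_group_def by simp

lemma zd_one: "\<one>\<^bsub>zd_group d\<^esub> = (\<lambda>i\<in>{..<d}. 0)"
  unfolding zd_group_def by simp

lemma zd_nat_pow: "x \<in> carrier (zd_group d) \<Longrightarrow> x [^]\<^bsub>zd_group d\<^esub> (n::nat) = (\<lambda>i\<in>{..<d}. int n * x i)"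
proof (induction n)
  case 0 then show ?case by (simp add: zd_one)
next
  case (Suc n)
  then show ?case by (auto simp: zd_mult algebra_simps)
qed

lemma zd_inv: "x \<in> carrier (zd_group d) \<Longrightarrow> inv\<^bsub>zd_group d\<^esub> x = (\<lambda>i\<in>{..<d}. - x i)"
  unfolding zd_group_def by simp

lemma zd_int_pow: "x \<in> carrier (zd_group d) \<Longrightarrow> x [^]\<^bsub>zd_group d\<^esub> (n::int) = (\<lambda>i\<in>{..<d}. n * x i)"
proof -
  assume x: "x \<in> carrier (zd_group d)"
  interpret Z: group "zd_group d" by (rule zd_group_group)
  show ?thesis
  proof (cases "n < 0")
    case True
    have p: "x [^]\<^bsub>zd_group d\<^esub> nat (-n) \<in> carrier (zd_group d)" using x by (rule Z.nat_pow_closed)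
    have "x [^]\<^bsub>zd_group d\<^esub> n = inv\<^bsub>zd_group d\<^esub> (x [^]\<^bsub>zd_group d\<^esub> nat (-n))"
      using True by (simp only: int_pow_def2 if_True)
    also have "\<dots> = (\<lambda>i\<in>{..<d}. - (x [^]\<^bsub>zd_group d\<^esub> nat (-n)) i)"
      by (rule zd_inv[OF p])
    also have "\<dots> = (\<lambda>i\<in>{..<d}. n * x i)"
      unfolding zd_nat_pow[OF x] using True by (intro restrict_ext) simp
    finally show ?thesis .
  next
    case False
    have "x [^]\<^bsub>zd_group d\<^esub> n = x [^]\<^bsub>zd_group d\<^esub> nat n"
      using False by (simp only: int_pow_def2 if_False)
    also have "\<dots> = (\<lambda>i\<in>{..<d}. n * x i)"
      unfolding zd_nat_pow[OF x] using False by (intro restrict_ext) simp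
    finally show ?thesis .
  qed
qed

lemma zd_basis_carrier: "zd_basis d j \<in> carrier (zd_group d)"
  unfolding zd_basis_def zd_carrier by auto

lemma zd_linear_aux:
  assumes hom: "\<alpha> \<in> hom (zd_group d) (zd_group d)"
    and S: "finite S" "S \<subseteq> {..<d}"
  shows "x \<in> carrier (zd_group d) \<Longrightarrow> (\<forall>j\<in>{..<d} - S. x j = 0) \<Longrightarrow> i < d \<Longrightarrow>
     \<alpha> x i = (\<Sum>j\<in>S. x j * \<alpha> (zd_basis d j) i)"
  using S
proof (induction S arbitrary: x rule: finite_induct)
  case empty
  then have "x = \<one>\<^bsub>zd_group d\<^esub>" by (auto simp: zd_one zd_carrier fun_eq_iff PiE_def extensional_def)
  then have "\<alpha> x = \<one>\<^bsub>zd_group d\<^esub>"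
    using hom zd_group_group hom_one by blast
  then show ?case using empty by (simp add: zd_one)
next
  case (insert k S)
  interpret Z: group "zd_group d" by (rule zd_group_group)
  have sub: "insert k S \<subseteq> {..<d}" using insert.prems by blast
  have xcar: "x \<in> carrier (zd_group d)" using insert.prems by blast
  have zer: "\<forall>j\<in>{..<d} - insert k S. x j = 0" using insert.prems by blast
  have ii: "i < d" using insert.prems by blast
  have k: "k < d" using sub by auto
  have xc: "x \<in> {..<d} \<rightarrow>\<^sub>E (UNIV::int set)" using xcar by (simp add: zd_carrier)
  define y where "y = x(k := 0)"
  have y: "y \<in> carrier (zd_group d)" unfolding zd_carrier y_def using xc k
    by (simp add: PiE_def extensional_def)
  have ek: "zd_basis d k \<in> carrier (zd_group d)" by (rule zd_basis_carrier)
  have pk: "zd_basis d k [^]\<^bsub>zd_group d\<^esub> x k \<in> carrier (zd_group d)" using ek by (rule Z.int_pow_closed)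
  have xe: "x = y \<otimes>\<^bsub>zd_group d\<^esub> (zd_basis d k [^]\<^bsub>zd_group d\<^esub> x k)"
    unfolding zd_mult zd_int_pow[OF ek]
  proof (rule ext)
    fix i
    show "x i = (\<lambda>i\<in>{..<d}. y i + (\<lambda>i\<in>{..<d}. x k * zd_basis d k i) i) i"
      using xc k by (cases "i < d") (auto simp: y_def zd_basis_def PiE_def extensional_def)
  qed
  have ak: "\<alpha> (zd_basis d k) \<in> carrier (zd_group d)" using hom ek by (auto simp: hom_def)
  have "\<alpha> x = \<alpha> (y \<otimes>\<^bsub>zd_group d\<^esub> (zd_basis d k [^]\<^bsub>zd_group d\<^esub> x k))"
    by (simp only: xe[symmetric])
  also have "\<dots> = \<alpha> y \<otimes>\<^bsub>zd_group d\<^esub> \<alpha> (zd_basis d k [^]\<^bsub>zd_group d\<^esub> x k)"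
    using hom y pk by (rule hom_mult)
  also have "\<alpha> (zd_basis d k [^]\<^bsub>zd_group d\<^esub> x k) = \<alpha> (zd_basis d k) [^]\<^bsub>zd_group d\<^esub> x k"
    by (rule hom_int_pow[OF hom ek zd_group_group zd_group_group])
  finally have ax: "\<alpha> x = \<alpha> y \<otimes>\<^bsub>zd_group d\<^esub> (\<alpha> (zd_basis d k) [^]\<^bsub>zd_group d\<^esub> x k)" .
  have "\<alpha> x i = \<alpha> y i + x k * \<alpha> (zd_basis d k) i"
    unfolding ax zd_mult zd_int_pow[OF ak] using ii by simp
  moreover have "\<alpha> y i = (\<Sum>j\<in>S. y j * \<alpha> (zd_basis d j) i)"
  proof (rule insert.IH)
    show "S \<subseteq> {..<d}" using sub by blast
    show "y \<in> carrier (zd_group d)" by (rule y)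
    show "\<forall>j\<in>{..<d} - S. y j = 0" using zer by (auto simp: y_def)
    show "i < d" by (rule ii)
  qed
  moreover have "(\<Sum>j\<in>S. y j * \<alpha> (zd_basis d j) i) = (\<Sum>j\<in>S. x j * \<alpha> (zd_basis d j) i)"
    using insert(2) by (intro sum.cong) (auto simp: y_def)
  ultimately show ?case using insert(1,2) by simp
qed

lemma zd_linear:
  assumes "\<alpha> \<in> hom (zd_group d) (zd_group d)" "x \<in> carrier (zd_group d)" "i < d"
  shows "\<alpha> x i = (\<Sum>j<d. x j * \<alpha> (zd_basis d j) i)"
  using zd_linear_aux[OF assms(1), of "{..<d}"] assms by auto



locale prop_setup =
  fixes G :: "('g, 'm) monoid_scheme" and T :: "'g set"
    and \<phi> :: "'g \<Rightarrow> nat \<Rightarrow> int" and d :: nat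
  assumes grp: "group G"
    and nrm: "T \<lhd> G"
    and iso: "\<phi> \<in> iso (G\<lparr>carrier := T\<rparr>) (zd_group d)"
begin

interpretation G: group G by (rule grp)
interpretation Z: group "zd_group d" by (rule zd_group_group)

lemma sub: "subgroup T G" using nrm normal_imp_subgroup by blast
lemma TG: "T \<subseteq> carrier G" using sub subgroup.subset by blast

lemma Hgrp: "group (G\<lparr>carrier := T\<rparr>)" using sub G.subgroup_imp_group by blast

lemma phi_hom: "\<phi> \<in> hom (G\<lparr>carrier := T\<rparr>) (zd_group d)" using iso by (simp add: iso_def)
lemma phi_bij: "bij_betw \<phi> T (carrier (zd_group d))" using iso by (simp add: iso_def)
lemma phi_inj: "inj_on \<phi> T" using phi_bij bij_betw_def by blast

lemma phi_car: "t \<in> T \<Longrightarrow> \<phi> t \<in> carrier (zd_group d)"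
  using phi_bij bij_betwE by blast

lemma phi_mult: "t \<in> T \<Longrightarrow> s \<in> T \<Longrightarrow> \<phi> (t \<otimes>\<^bsub>G\<^esub> s) = \<phi> t \<otimes>\<^bsub>zd_group d\<^esub> \<phi> s"
  using phi_hom unfolding hom_def by simp

lemma phi_one: "\<phi> \<one>\<^bsub>G\<^esub> = \<one>\<^bsub>zd_group d\<^esub>"
proof -
  have "\<phi> \<one>\<^bsub>G\<lparr>carrier := T\<rparr>\<^esub> = \<one>\<^bsub>zd_group d\<^esub>"
    using hom_one[OF phi_hom Hgrp zd_group_group] .
  then show ?thesis by simp
qed

lemma phi_pow: "t \<in> T \<Longrightarrow> \<phi> (t [^]\<^bsub>G\<^esub> (n::int)) = \<phi> t [^]\<^bsub>zd_group d\<^esub> n"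
proof -
  assume t: "t \<in> T"
  have "t [^]\<^bsub>G\<^esub> n = t [^]\<^bsub>G\<lparr>carrier := T\<rparr>\<^esub> n" using G.int_pow_consistent[OF sub t] .
  moreover have "\<phi> (t [^]\<^bsub>G\<lparr>carrier := T\<rparr>\<^esub> n) = \<phi> t [^]\<^bsub>zd_group d\<^esub> n"
    using hom_int_pow[OF phi_hom _ Hgrp zd_group_group] t by simp
  ultimately show ?thesis by simp
qed

lemma phi_pow_nat: "t \<in> T \<Longrightarrow> \<phi> (t [^]\<^bsub>G\<^esub> (n::nat)) = \<phi> t [^]\<^bsub>zd_group d\<^esub> n"
  using phi_pow[of t "int n"] by (simp add: int_pow_int)

definition "\<psi> = the_inv_into T \<phi>"

lemma psi: "x \<in> carrier (zd_group d) \<Longrightarrow> \<psi> x \<in> T \<and> \<phi> (\<psi> x) = x"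
  unfolding \<psi>_def using phi_bij
  by (metis bij_betw_def f_the_inv_into_f the_inv_into_into subset_refl)

lemma psi_phi: "t \<in> T \<Longrightarrow> \<psi> (\<phi> t) = t"
  unfolding \<psi>_def using phi_inj by (simp add: the_inv_into_f_f)

lemma conj_in: "g \<in> carrier G \<Longrightarrow> t \<in> T \<Longrightarrow> g \<otimes>\<^bsub>G\<^esub> t \<otimes>\<^bsub>G\<^esub> inv\<^bsub>G\<^esub> g \<in> T"
  by (rule normal.inv_op_closed2[OF nrm])

lemma conj_formula:
  assumes g: "g \<in> carrier G" and t: "t \<in> T" and i: "i < d"
  shows "\<phi> (g \<otimes>\<^bsub>G\<^esub> t \<otimes>\<^bsub>G\<^esub> inv\<^bsub>G\<^esub> g) i = (\<Sum>j<d. conj_matrix G T \<phi> d g i j * \<phi> t j)"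
proof -
  define \<alpha> where "\<alpha> x = \<phi> (g \<otimes>\<^bsub>G\<^esub> \<psi> x \<otimes>\<^bsub>G\<^esub> inv\<^bsub>G\<^esub> g)" for x
  have psi_mult: "\<psi> (x \<otimes>\<^bsub>zd_group d\<^esub> y) = \<psi> x \<otimes>\<^bsub>G\<^esub> \<psi> y"
    if "x \<in> carrier (zd_group d)" "y \<in> carrier (zd_group d)" for x y
  proof -
    have "\<psi> x \<otimes>\<^bsub>G\<^esub> \<psi> y \<in> T" using subgroup.m_closed[OF sub] psi[OF that(1)] psi[OF that(2)] by blast
    moreover have "\<phi> (\<psi> x \<otimes>\<^bsub>G\<^esub> \<psi> y) = x \<otimes>\<^bsub>zd_group d\<^esub> y" using psi that phi_mult by simp
    ultimately show ?thesis using psi_phi by metis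
  qed
  have hom: "\<alpha> \<in> hom (zd_group d) (zd_group d)"
  proof (rule homI)
    fix x assume "x \<in> carrier (zd_group d)"
    then show "\<alpha> x \<in> carrier (zd_group d)" unfolding \<alpha>_def using psi conj_in[OF g] phi_car by blast
  next
    fix x y assume x: "x \<in> carrier (zd_group d)" and y: "y \<in> carrier (zd_group d)"
    have px: "\<psi> x \<in> carrier G" and py: "\<psi> y \<in> carrier G" using psi[OF x] psi[OF y] TG by blast+
    have "g \<otimes>\<^bsub>G\<^esub> (\<psi> x \<otimes>\<^bsub>G\<^esub> \<psi> y) \<otimes>\<^bsub>G\<^esub> inv\<^bsub>G\<^esub> g =
      (g \<otimes>\<^bsub>G\<^esub> \<psi> x \<otimes>\<^bsub>G\<^esub> inv\<^bsub>G\<^esub> g) \<otimes>\<^bsub>G\<^esub> (g \<otimes>\<^bsub>G\<^esub> \<psi> y \<otimes>\<^bsub>G\<^esub> inv\<^bsub>G\<^esub> g)"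
      using px py g by (simp add: G.inv_solve_left G.m_assoc)
    then show "\<alpha> (x \<otimes>\<^bsub>zd_group d\<^esub> y) = \<alpha> x \<otimes>\<^bsub>zd_group d\<^esub> \<alpha> y"
      unfolding \<alpha>_def using psi_mult[OF x y] phi_mult conj_in g psi x y by simp
  qed
  have "\<alpha> (\<phi> t) i = (\<Sum>j<d. \<phi> t j * \<alpha> (zd_basis d j) i)"
    using zd_linear[OF hom phi_car[OF t] i] .
  moreover have "\<alpha> (\<phi> t) = \<phi> (g \<otimes>\<^bsub>G\<^esub> t \<otimes>\<^bsub>G\<^esub> inv\<^bsub>G\<^esub> g)" unfolding \<alpha>_def using psi_phi t by simp
  moreover have "conj_matrix G T \<phi> d g i j = \<alpha> (zd_basis d j) i" for j
    unfolding conj_matrix_def \<alpha>_def \<psi>_def by simp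
  ultimately show ?thesis by (simp add: mult.commute)
qed

lemma torsion_free:
  assumes t: "t \<in> T" and n: "n > 0" and e: "t [^]\<^bsub>G\<^esub> (n::nat) = \<one>\<^bsub>G\<^esub>"
  shows "t = \<one>\<^bsub>G\<^esub>"
proof -
  have "\<phi> t [^]\<^bsub>zd_group d\<^esub> n = \<one>\<^bsub>zd_group d\<^esub>" using phi_pow_nat[OF t, of n, symmetric] e phi_one by simp
  then have "\<forall>i<d. int n * \<phi> t i = 0" using phi_car[OF t]
    by (auto simp: zd_nat_pow zd_one fun_eq_iff split: if_splits)
  then have "\<forall>i<d. \<phi> t i = 0" using n by simp
  then have "\<phi> t = \<phi> \<one>\<^bsub>G\<^esub>" using phi_car[OF t] phi_one
    by (auto simp: zd_one zd_carrier fun_eq_iff PiE_def extensional_def)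
  moreover have "\<one>\<^bsub>G\<^esub> \<in> T" using subgroup.one_closed[OF sub] by blast
  ultimately show ?thesis using phi_inj t inj_on_def by metis
qed


lemma key:
  assumes irr: "rat_rep_irreducible G T \<phi> d"
    and K: "K \<lhd> G" "K \<subseteq> T" "k0 \<in> K" "k0 \<noteq> \<one>\<^bsub>G\<^esub>"
    and s: "s \<in> T"
  shows "\<exists>n::nat. n > 0 \<and> s [^]\<^bsub>G\<^esub> n \<in> K"
proof -
  have Ksub: "subgroup K G" using K(1) normal_imp_subgroup by blast
  have KT: "x \<in> K \<Longrightarrow> x \<in> T" for x using K(2) by blast
  define W where "W = {v. v \<in> ratvecs d \<and>
     (\<exists>n::nat. n > 0 \<and> (\<exists>t\<in>K. \<forall>i<d. of_nat n * v i = of_int (\<phi> t i)))}"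
  have Kpow: "t [^]\<^bsub>G\<^esub> (n::int) \<in> K" if "t \<in> K" for t n
    using G.subgroup_int_pow_closed[OF Ksub that] .
  have Kmult: "t \<otimes>\<^bsub>G\<^esub> u \<in> K" if "t \<in> K" "u \<in> K" for t u
    using subgroup.m_closed[OF Ksub that] .
  have phi_lin: "\<phi> (t [^]\<^bsub>G\<^esub> (a::int) \<otimes>\<^bsub>G\<^esub> u [^]\<^bsub>G\<^esub> (b::int)) i = a * \<phi> t i + b * \<phi> u i"
    if "t \<in> T" "u \<in> T" "i < d" for t u a b i
  proof -
    have "t [^]\<^bsub>G\<^esub> a \<in> T" "u [^]\<^bsub>G\<^esub> b \<in> T"
      using G.subgroup_int_pow_closed[OF sub that(1)] G.subgroup_int_pow_closed[OF sub that(2)] by auto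
    then show ?thesis using that phi_car
      by (simp add: phi_mult phi_pow zd_mult zd_int_pow)
  qed
  have sp: "rat_subspace d W"
    unfolding rat_subspace_def
  proof (intro conjI ballI allI)
    show "W \<subseteq> ratvecs d" unfolding W_def by blast
  next
    have "\<one>\<^bsub>G\<^esub> \<in> K" using subgroup.one_closed[OF Ksub] .
    moreover have "\<forall>i<d. of_nat 1 * (0::rat) = of_int (\<phi> \<one>\<^bsub>G\<^esub> i)"
      by (simp add: phi_one zd_one)
    ultimately have "\<exists>n::nat. n > 0 \<and> (\<exists>t\<in>K. \<forall>i<d. of_nat n * (0::rat) = of_int (\<phi> t i))"
      by (intro exI[of _ "1::nat"]) blast
    then show "(\<lambda>_. 0) \<in> W" unfolding W_def ratvecs_def by simp
  next
    fix v w assume v: "v \<in> W" and w: "w \<in> W"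
    from v obtain n t where n: "n > 0" "t \<in> K" "\<forall>i<d. of_nat n * v i = of_int (\<phi> t i)" and vr: "v \<in> ratvecs d"
      unfolding W_def by blast
    from w obtain m u where m: "m > 0" "u \<in> K" "\<forall>i<d. of_nat m * w i = of_int (\<phi> u i)" and wr: "w \<in> ratvecs d"
      unfolding W_def by blast
    have "\<forall>i<d. of_nat (n * m) * (v i + w i) = of_int (\<phi> (t [^]\<^bsub>G\<^esub> int m \<otimes>\<^bsub>G\<^esub> u [^]\<^bsub>G\<^esub> int n) i)"
    proof (intro allI impI)
      fix i assume i: "i < d"
      have "of_nat (n * m) * (v i + w i) = of_nat m * (of_nat n * v i) + of_nat n * (of_nat m * w i)"
        by (simp add: algebra_simps)
      also have "\<dots> = of_int (int m * \<phi> t i + int n * \<phi> u i)" using n m i by simp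
      also have "\<dots> = of_int (\<phi> (t [^]\<^bsub>G\<^esub> int m \<otimes>\<^bsub>G\<^esub> u [^]\<^bsub>G\<^esub> int n) i)"
        using phi_lin[OF KT[OF n(2)] KT[OF m(2)] i] by simp
      finally show "of_nat (n * m) * (v i + w i) = of_int (\<phi> (t [^]\<^bsub>G\<^esub> int m \<otimes>\<^bsub>G\<^esub> u [^]\<^bsub>G\<^esub> int n) i)" .
    qed
    moreover have "t [^]\<^bsub>G\<^esub> int m \<otimes>\<^bsub>G\<^esub> u [^]\<^bsub>G\<^esub> int n \<in> K" using Kmult Kpow n m by blast
    moreover have "(\<lambda>i. v i + w i) \<in> ratvecs d" using vr wr by (simp add: ratvecs_def)
    ultimately show "(\<lambda>i. v i + w i) \<in> W" unfolding W_def using n m by (intro CollectI conjI) (auto intro!: exI[of _ "n*m"])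
  next
    fix c :: rat and v assume v: "v \<in> W"
    from v obtain n t where n: "n > 0" "t \<in> K" "\<forall>i<d. of_nat n * v i = of_int (\<phi> t i)" and vr: "v \<in> ratvecs d"
      unfolding W_def by blast
    obtain p q where pq: "quotient_of c = (p, q)" by (cases "quotient_of c")
    have q: "q > 0" using quotient_of_denom_pos[OF pq] .
    have c: "c = of_int p / of_int q" using quotient_of_div[OF pq] .
    have "\<forall>i<d. of_nat (n * nat q) * (c * v i) = of_int (\<phi> (t [^]\<^bsub>G\<^esub> p \<otimes>\<^bsub>G\<^esub> t [^]\<^bsub>G\<^esub> (0::int)) i)"
    proof (intro allI impI)
      fix i assume i: "i < d"
      have "of_nat (n * nat q) * (c * v i) = of_int p * (of_nat n * v i)"
        using q by (simp add: c field_simps)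
      also have "\<dots> = of_int (p * \<phi> t i + 0 * \<phi> t i)" using n i by simp
      also have "\<dots> = of_int (\<phi> (t [^]\<^bsub>G\<^esub> p \<otimes>\<^bsub>G\<^esub> t [^]\<^bsub>G\<^esub> (0::int)) i)"
        using phi_lin[OF KT[OF n(2)] KT[OF n(2)] i, of p 0] by simp
      finally show "of_nat (n * nat q) * (c * v i) = of_int (\<phi> (t [^]\<^bsub>G\<^esub> p \<otimes>\<^bsub>G\<^esub> t [^]\<^bsub>G\<^esub> (0::int)) i)" .
    qed
    moreover have "t [^]\<^bsub>G\<^esub> p \<otimes>\<^bsub>G\<^esub> t [^]\<^bsub>G\<^esub> (0::int) \<in> K" using Kmult Kpow n by blast
    moreover have "(\<lambda>i. c * v i) \<in> ratvecs d" using vr by (simp add: ratvecs_def)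
    moreover have "n * nat q > 0" using n q by simp
    ultimately show "(\<lambda>i. c * v i) \<in> W" unfolding W_def by blast
  qed
  have inv: "rat_rep G T \<phi> d g ` W \<subseteq> W" if g: "g \<in> carrier G" for g
  proof
    fix u assume "u \<in> rat_rep G T \<phi> d g ` W"
    then obtain v where v: "v \<in> W" and u: "u = rat_rep G T \<phi> d g v" by blast
    from v obtain n t where n: "n > 0" "t \<in> K" "\<forall>i<d. of_nat n * v i = of_int (\<phi> t i)"
      unfolding W_def by blast
    have "\<forall>i<d. of_nat n * u i = of_int (\<phi> (g \<otimes>\<^bsub>G\<^esub> t \<otimes>\<^bsub>G\<^esub> inv\<^bsub>G\<^esub> g) i)"
    proof (intro allI impI)
      fix i assume i: "i < d"
      have "of_nat n * u i = (\<Sum>j<d. of_int (conj_matrix G T \<phi> d g i j) * (of_nat n * v j))"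
        using i by (simp add: u rat_rep_def sum_distrib_left algebra_simps)
      also have "\<dots> = (\<Sum>j<d. of_int (conj_matrix G T \<phi> d g i j) * of_int (\<phi> t j))"
        using n by (intro sum.cong) auto
      also have "\<dots> = of_int (\<phi> (g \<otimes>\<^bsub>G\<^esub> t \<otimes>\<^bsub>G\<^esub> inv\<^bsub>G\<^esub> g) i)"
        using conj_formula[OF g KT[OF n(2)] i] by simp
      finally show "of_nat n * u i = of_int (\<phi> (g \<otimes>\<^bsub>G\<^esub> t \<otimes>\<^bsub>G\<^esub> inv\<^bsub>G\<^esub> g) i)" .
    qed
    moreover have "g \<otimes>\<^bsub>G\<^esub> t \<otimes>\<^bsub>G\<^esub> inv\<^bsub>G\<^esub> g \<in> K" using normal.inv_op_closed2[OF K(1) g n(2)] .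
    moreover have "u \<in> ratvecs d" by (simp add: u rat_rep_def ratvecs_def)
    ultimately show "u \<in> W" unfolding W_def using n(1) by blast
  qed
  define vec where "vec x = (\<lambda>i. if i < d then (of_int (\<phi> x i) :: rat) else 0)" for x
  have vecW: "vec k0 \<in> W"
    unfolding W_def vec_def ratvecs_def using K(3) by (auto intro!: exI[of _ 1])
  have "vec k0 \<noteq> (\<lambda>_. 0)"
  proof
    assume "vec k0 = (\<lambda>_. 0)"
    then have "\<forall>i<d. \<phi> k0 i = 0" unfolding vec_def by (metis of_int_eq_0_iff)
    then have "\<phi> k0 = \<phi> \<one>\<^bsub>G\<^esub>" using phi_car[OF KT[OF K(3)]] phi_one
      by (auto simp: zd_one zd_carrier fun_eq_iff PiE_def extensional_def)
    moreover have "\<one>\<^bsub>G\<^esub> \<in> T" using subgroup.one_closed[OF sub] by blast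
    ultimately show False using phi_inj KT[OF K(3)] K(4) inj_on_def by metis
  qed
  then have "W \<noteq> {\<lambda>_. 0}" using vecW by blast
  then have "W = ratvecs d" using irr sp inv unfolding rat_rep_irreducible_def by blast
  moreover have "vec s \<in> ratvecs d" unfolding vec_def ratvecs_def by simp
  ultimately obtain n t where n: "n > 0" "t \<in> K" "\<forall>i<d. of_nat n * vec s i = of_int (\<phi> t i)"
    unfolding W_def by blast
  have "\<forall>i<d. \<phi> (s [^]\<^bsub>G\<^esub> n) i = \<phi> t i"
  proof (intro allI impI)
    fix i assume i: "i < d"
    have "of_int (int n * \<phi> s i) = (of_int (\<phi> t i) :: rat)" using n(3) i by (simp add: vec_def)
    then have "int n * \<phi> s i = \<phi> t i" by (metis of_int_eq_iff)
    then show "\<phi> (s [^]\<^bsub>G\<^esub> n) i = \<phi> t i" using i phi_car[OF s] by (simp add: phi_pow_nat[OF s] zd_nat_pow)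
  qed
  moreover have "s [^]\<^bsub>G\<^esub> n \<in> T" using sub s G.subgroup_int_pow_closed[OF sub s, of "int n"] by (simp add: int_pow_int)
  moreover have c1: "\<phi> (s [^]\<^bsub>G\<^esub> n) \<in> {..<d} \<rightarrow>\<^sub>E (UNIV::int set)"
    using phi_car[OF \<open>s [^]\<^bsub>G\<^esub> n \<in> T\<close>] by (simp add: zd_carrier)
  moreover have c2: "\<phi> t \<in> {..<d} \<rightarrow>\<^sub>E (UNIV::int set)"
    using phi_car[OF KT[OF n(2)]] by (simp add: zd_carrier)
  ultimately have "\<phi> (s [^]\<^bsub>G\<^esub> n) = \<phi> t"
    by (intro PiE_ext[OF c1 c2]) auto
  then have "s [^]\<^bsub>G\<^esub> n = t" using phi_inj KT[OF n(2)] \<open>s [^]\<^bsub>G\<^esub> n \<in> T\<close> inj_on_def by metis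
  then show ?thesis using n by blast
qed


lemma claimA:
  assumes faith: "conj_action_faithful G T"
    and f1: "f1 \<in> hom G K1" and f2: "f2 \<in> hom G K2" and gK1: "group K1" and gK2: "group K2"
    and sur: "\<forall>a\<in>carrier K1. \<exists>g\<in>carrier G. f1 g = a \<and> f2 g = \<one>\<^bsub>K2\<^esub>"
    and triv: "T \<inter> kernel G K2 f2 = {\<one>\<^bsub>G\<^esub>}"
  shows "carrier K1 = {\<one>\<^bsub>K1\<^esub>}"
proof -
  interpret K2: group K2 by (rule gK2)
  interpret h2: group_hom G K2 f2 using f2 grp gK2 by (simp add: group_hom_def group_hom_axioms_def)
  interpret h1: group_hom G K1 f1 using f1 grp gK1 by (simp add: group_hom_def group_hom_axioms_def)
  have "a = \<one>\<^bsub>K1\<^esub>" if a: "a \<in> carrier K1" for a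
  proof -
    obtain g where g: "g \<in> carrier G" "f1 g = a" "f2 g = \<one>\<^bsub>K2\<^esub>" using sur a by blast
    have comm: "g \<otimes>\<^bsub>G\<^esub> t \<otimes>\<^bsub>G\<^esub> inv\<^bsub>G\<^esub> g = t" if t: "t \<in> T" for t
    proof -
      have tG: "t \<in> carrier G" using t TG by blast
      define c where "c = g \<otimes>\<^bsub>G\<^esub> t \<otimes>\<^bsub>G\<^esub> inv\<^bsub>G\<^esub> g \<otimes>\<^bsub>G\<^esub> inv\<^bsub>G\<^esub> t"
      have cT: "c \<in> T" unfolding c_def
        by (rule subgroup.m_closed[OF sub conj_in[OF g(1) t] subgroup.m_inv_closed[OF sub t]])
      have "f2 c = \<one>\<^bsub>K2\<^esub>" unfolding c_def using g tG
        by (simp add: h2.hom_mult h2.hom_inv)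
      then have "c \<in> T \<inter> kernel G K2 f2" using cT TG by (auto simp: kernel_def)
      then have "c = \<one>\<^bsub>G\<^esub>" using triv by blast
      then show ?thesis unfolding c_def using g tG
        by (metis G.inv_closed G.inv_equality G.inv_inv G.m_closed)
    qed
    have "T #>\<^bsub>G\<^esub> g = T" using faith g comm unfolding conj_action_faithful_def by blast
    moreover have "g \<in> T #>\<^bsub>G\<^esub> g"
      using g subgroup.one_closed[OF sub] unfolding r_coset_def by force
    ultimately have "g \<in> T \<inter> kernel G K2 f2" using g by (auto simp: kernel_def)
    then have "g = \<one>\<^bsub>G\<^esub>" using triv by blast
    then show ?thesis using g by simp
  qed
  then show ?thesis using gK1 group.is_monoid monoid.one_closed by blast
qed

lemma claimB:
  assumes irr: "rat_rep_irreducible G T \<phi> d"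
    and f1: "f1 \<in> hom G K1" and f2: "f2 \<in> hom G K2" and gK1: "group K1" and gK2: "group K2"
    and inj: "\<forall>g\<in>carrier G. f1 g = \<one>\<^bsub>K1\<^esub> \<and> f2 g = \<one>\<^bsub>K2\<^esub> \<longrightarrow> g = \<one>\<^bsub>G\<^esub>"
  shows "T \<inter> kernel G K2 f2 = {\<one>\<^bsub>G\<^esub>} \<or> T \<inter> kernel G K1 f1 = {\<one>\<^bsub>G\<^esub>}"
proof (rule ccontr)
  interpret h2: group_hom G K2 f2 using f2 grp gK2 by (simp add: group_hom_def group_hom_axioms_def)
  interpret h1: group_hom G K1 f1 using f1 grp gK1 by (simp add: group_hom_def group_hom_axioms_def)
  assume "\<not> ?thesis"
  moreover have "\<one>\<^bsub>G\<^esub> \<in> T \<inter> kernel G K2 f2" "\<one>\<^bsub>G\<^esub> \<in> T \<inter> kernel G K1 f1"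
    using subgroup.one_closed[OF sub] by (auto simp: kernel_def)
  ultimately obtain k1 k2 where k1: "k1 \<in> T \<inter> kernel G K2 f2" "k1 \<noteq> \<one>\<^bsub>G\<^esub>"
    and k2: "k2 \<in> T \<inter> kernel G K1 f1" "k2 \<noteq> \<one>\<^bsub>G\<^esub>" by blast
  have N: "T \<inter> kernel G K2 f2 \<lhd> G" using G.normal_subgroup_intersect[OF nrm h2.normal_kernel] .
  obtain n :: nat where n: "n > 0" "k2 [^]\<^bsub>G\<^esub> n \<in> T \<inter> kernel G K2 f2"
    using key[OF irr N _ k1] k2 by blast
  have k2G: "k2 \<in> carrier G" using k2 by (auto simp: kernel_def)
  have "f1 (k2 [^]\<^bsub>G\<^esub> n) = \<one>\<^bsub>K1\<^esub>" using k2 k2G by (simp add: h1.hom_nat_pow kernel_def)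
  moreover have "f2 (k2 [^]\<^bsub>G\<^esub> n) = \<one>\<^bsub>K2\<^esub>" using n by (simp add: kernel_def)
  ultimately have "k2 [^]\<^bsub>G\<^esub> n = \<one>\<^bsub>G\<^esub>" using inj k2G by simp
  then have "k2 = \<one>\<^bsub>G\<^esub>" using torsion_free k2 n by blast
  then show False using k2 by blast
qed

lemma nontriv: "d \<ge> 1 \<Longrightarrow> carrier G \<noteq> {\<one>\<^bsub>G\<^esub>}"
proof
  assume d: "d \<ge> 1" and c: "carrier G = {\<one>\<^bsub>G\<^esub>}"
  have e: "zd_basis d 0 \<in> carrier (zd_group d)" by (rule zd_basis_carrier)
  have "\<psi> (zd_basis d 0) \<in> carrier G" using psi[OF e] TG by blast
  then have "\<psi> (zd_basis d 0) = \<one>\<^bsub>G\<^esub>" using c by blast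
  then have "zd_basis d 0 = \<one>\<^bsub>zd_group d\<^esub>" using psi[OF e] phi_one by metis
  then have "zd_basis d 0 0 = (\<one>\<^bsub>zd_group d\<^esub>) 0" by simp
  then show False using d by (simp add: zd_basis_def zd_one)
qed

end

theorem proposition1:
  fixes G :: "('g, 'm) monoid_scheme" and T :: "'g set"
    and \<phi> :: "'g \<Rightarrow> nat \<Rightarrow> int" and d :: nat
  assumes "group G"
    and "T \<lhd> G"
    and "comm_group (G\<lparr>carrier := T\<rparr>)"
    and "d \<ge> 1"
    and "\<phi> \<in> iso (G\<lparr>carrier := T\<rparr>) (zd_group d)"
    and "conj_action_faithful G T"
    and "rat_rep_irreducible G T \<phi> d"
  shows "carrier G \<noteq> {\<one>\<^bsub>G\<^esub>} \<and>
    (\<forall>(G1 :: 'b monoid) (G2 :: 'c monoid). group G1 \<longrightarrow> group G2 \<longrightarrow> G \<cong> G1 \<times>\<times> G2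
       \<longrightarrow> carrier G1 = {\<one>\<^bsub>G1\<^esub>} \<or> carrier G2 = {\<one>\<^bsub>G2\<^esub>})"
proof -
  interpret P: prop_setup G T \<phi> d using assms by (simp add: prop_setup_def)
  interpret G: group G by fact
  have "carrier G1 = {\<one>\<^bsub>G1\<^esub>} \<or> carrier G2 = {\<one>\<^bsub>G2\<^esub>}"
    if g1: "group G1" and g2: "group G2" and i: "G \<cong> G1 \<times>\<times> G2" for G1 :: "'b monoid" and G2 :: "'c monoid"
  proof -
    obtain h where h: "h \<in> iso G (G1 \<times>\<times> G2)" using i unfolding is_iso_def by blast
    have hh: "h \<in> hom G (G1 \<times>\<times> G2)" and hb: "bij_betw h (carrier G) (carrier (G1 \<times>\<times> G2))"
      using h by (auto simp: iso_def)
    have hc: "x \<in> carrier G \<Longrightarrow> h x \<in> carrier G1 \<times> carrier G2" for x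
      using hh by (auto simp: hom_def)
    have hm: "x \<in> carrier G \<Longrightarrow> y \<in> carrier G \<Longrightarrow> h (x \<otimes>\<^bsub>G\<^esub> y) = h x \<otimes>\<^bsub>G1 \<times>\<times> G2\<^esub> h y" for x y
      using hh by (auto simp: hom_def)
    have f1: "(fst \<circ> h) \<in> hom G G1"
    proof (rule homI)
      fix x assume "x \<in> carrier G"
      then show "(fst \<circ> h) x \<in> carrier G1" using hc[of x] by (simp add: mem_Times_iff)
    next
      fix x y assume "x \<in> carrier G" "y \<in> carrier G"
      then show "(fst \<circ> h) (x \<otimes>\<^bsub>G\<^esub> y) = (fst \<circ> h) x \<otimes>\<^bsub>G1\<^esub> (fst \<circ> h) y"
        using hm[of x y] by (simp add: mult_DirProd')
    qed
    have f2: "(snd \<circ> h) \<in> hom G G2"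
    proof (rule homI)
      fix x assume "x \<in> carrier G"
      then show "(snd \<circ> h) x \<in> carrier G2" using hc[of x] by (simp add: mem_Times_iff)
    next
      fix x y assume "x \<in> carrier G" "y \<in> carrier G"
      then show "(snd \<circ> h) (x \<otimes>\<^bsub>G\<^esub> y) = (snd \<circ> h) x \<otimes>\<^bsub>G2\<^esub> (snd \<circ> h) y"
        using hm[of x y] by (simp add: mult_DirProd')
    qed
    have h1: "h \<one>\<^bsub>G\<^esub> = (\<one>\<^bsub>G1\<^esub>, \<one>\<^bsub>G2\<^esub>)"
      using hom_one[OF hh \<open>group G\<close> DirProd_group[OF g1 g2]] by simp
    have inj: "\<forall>g\<in>carrier G. (fst \<circ> h) g = \<one>\<^bsub>G1\<^esub> \<and> (snd \<circ> h) g = \<one>\<^bsub>G2\<^esub> \<longrightarrow> g = \<one>\<^bsub>G\<^esub>"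
    proof (intro ballI impI)
      fix g assume g: "g \<in> carrier G" and e: "(fst \<circ> h) g = \<one>\<^bsub>G1\<^esub> \<and> (snd \<circ> h) g = \<one>\<^bsub>G2\<^esub>"
      then have "h g = h \<one>\<^bsub>G\<^esub>" using h1 by (simp add: prod_eq_iff)
      then show "g = \<one>\<^bsub>G\<^esub>" using hb g G.one_closed unfolding bij_betw_def inj_on_def by blast
    qed
    have s1: "\<forall>a\<in>carrier G1. \<exists>g\<in>carrier G. (fst \<circ> h) g = a \<and> (snd \<circ> h) g = \<one>\<^bsub>G2\<^esub>"
    proof
      fix a assume a: "a \<in> carrier G1"
      then have "(a, \<one>\<^bsub>G2\<^esub>) \<in> carrier (G1 \<times>\<times> G2)" using g2 group.is_monoid monoid.one_closed by fastforce
      then obtain g where "g \<in> carrier G" "h g = (a, \<one>\<^bsub>G2\<^esub>)" using hb unfolding bij_betw_def by (metis imageE)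
      then show "\<exists>g\<in>carrier G. (fst \<circ> h) g = a \<and> (snd \<circ> h) g = \<one>\<^bsub>G2\<^esub>" by (intro bexI[where x=g]) auto
    qed
    have s2: "\<forall>a\<in>carrier G2. \<exists>g\<in>carrier G. (snd \<circ> h) g = a \<and> (fst \<circ> h) g = \<one>\<^bsub>G1\<^esub>"
    proof
      fix a assume a: "a \<in> carrier G2"
      then have "(\<one>\<^bsub>G1\<^esub>, a) \<in> carrier (G1 \<times>\<times> G2)" using g1 group.is_monoid monoid.one_closed by fastforce
      then obtain g where "g \<in> carrier G" "h g = (\<one>\<^bsub>G1\<^esub>, a)" using hb unfolding bij_betw_def by (metis imageE)
      then show "\<exists>g\<in>carrier G. (snd \<circ> h) g = a \<and> (fst \<circ> h) g = \<one>\<^bsub>G1\<^esub>" by (intro bexI[where x=g]) auto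
    qed
    from P.claimB[OF assms(7) f1 f2 g1 g2 inj]
    show ?thesis
    proof
      assume "T \<inter> kernel G G2 (snd \<circ> h) = {\<one>\<^bsub>G\<^esub>}"
      then show ?thesis using P.claimA[OF assms(6) f1 f2 g1 g2 s1] by blast
    next
      assume "T \<inter> kernel G G1 (fst \<circ> h) = {\<one>\<^bsub>G\<^esub>}"
      then show ?thesis using P.claimA[OF assms(6) f2 f1 g2 g1 s2] by blast
    qed
  qed
  then show ?thesis using P.nontriv assms(4) by blast
qed

end
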